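(* Let $K,L\subseteq\mathbb{R}^n$ be convex bodies and let $C(K,L)=\mathrm{conv}\big((L\times\{0\})\cup(-K\times\{1\})\big)\subseteq\mathbb{R}^{n+1}$. For every $\theta\in[0,1]$, \[ \mathrm{Vol}_{n+1}\big(C(K,L)\big)\le \frac{1}{n+1}\cdot\frac{\mathrm{Vol}_n(K)\,\mathrm{Vol}_n(L)}{\mathrm{Vol}_n\big(\theta K\cap(1-\theta)L\big)}. \]
   Context: A convex body is a compact convex subset of $\mathbb{R}^n$ with non-empty interior. $\mathrm{Vol}_m$ denotes $m$-dimensional Lebesgue measure. *)

theory Defs
  imports "HOL-Analysis.Analysis"
begin

text \<open>A convex body: compact convex set with non-empty interior.\<close>
definition convex_body :: "'a::euclidean_space set \<Rightarrow> bool" where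
  "convex_body K \<longleftrightarrow> compact K \<and> convex K \<and> interior K \<noteq> {}"

text \<open>C(K,L) = conv((L x {0}) union (-K x {1})) in R^n x R = R^(n+1).\<close>
definition cone_body :: "'a::euclidean_space set \<Rightarrow> 'a set \<Rightarrow> ('a \<times> real) set" where
  "cone_body K L = convex hull ((\<lambda>x. (x, 0::real)) ` L \<union> (\<lambda>x. (- x, 1::real)) ` K)"

end

theory Submission
  imports Defs
begin


lemma conv_scaled:
  fixes S :: "'a::real_vector set"
  assumes "convex S" "u \<in> S" "v \<in> S" "0 \<le> a" "0 \<le> b"
  shows "\<exists>w\<in>S. a *\<^sub>R u + b *\<^sub>R v = (a + b) *\<^sub>R w"
proof (cases "a + b = 0")
  case True
  then have "a = 0" "b = 0" using assms by auto
  then show ?thesis using assms by auto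
next
  case False
  then have pos: "a + b > 0" using assms by auto
  let ?w = "(a/(a+b)) *\<^sub>R u + (b/(a+b)) *\<^sub>R v"
  have "?w \<in> S"
    using assms pos by (intro convexD) (auto simp: add_divide_distrib[symmetric])
  moreover have "a *\<^sub>R u + b *\<^sub>R v = (a + b) *\<^sub>R ?w"
    using pos by (simp add: scaleR_add_right)
  ultimately show ?thesis by blast
qed

definition Cset :: "'a::euclidean_space set \<Rightarrow> 'a set \<Rightarrow> ('a \<times> real) set" where
  "Cset K L = {(x,t). 0 \<le> t \<and> t \<le> 1 \<and> (\<exists>l\<in>L. \<exists>k\<in>K. x = (1-t) *\<^sub>R l - t *\<^sub>R k)}"

lemma convex_Cset:
  assumes "convex K" "convex L"
  shows "convex (Cset K L)"
proof (rule convexI)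
  fix p1 p2 :: "'a \<times> real" and a b :: real
  assume p1: "p1 \<in> Cset K L" and p2: "p2 \<in> Cset K L" and ab: "0 \<le> a" "0 \<le> b" "a + b = 1"
  obtain x1 t1 l1 k1 where e1: "p1 = (x1,t1)" "0 \<le> t1" "t1 \<le> 1" "l1 \<in> L" "k1 \<in> K"
     "x1 = (1-t1) *\<^sub>R l1 - t1 *\<^sub>R k1" using p1 by (auto simp: Cset_def)
  obtain x2 t2 l2 k2 where e2: "p2 = (x2,t2)" "0 \<le> t2" "t2 \<le> 1" "l2 \<in> L" "k2 \<in> K"
     "x2 = (1-t2) *\<^sub>R l2 - t2 *\<^sub>R k2" using p2 by (auto simp: Cset_def)
  obtain l where l: "l \<in> L" "(a*(1-t1)) *\<^sub>R l1 + (b*(1-t2)) *\<^sub>R l2 = (a*(1-t1) + b*(1-t2)) *\<^sub>R l"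
    using conv_scaled[OF assms(2) e1(4) e2(4), of "a*(1-t1)" "b*(1-t2)"] ab e1 e2 by auto
  obtain k where k: "k \<in> K" "(a*t1) *\<^sub>R k1 + (b*t2) *\<^sub>R k2 = (a*t1 + b*t2) *\<^sub>R k"
    using conv_scaled[OF assms(1) e1(5) e2(5), of "a*t1" "b*t2"] ab e1 e2 by auto
  have t: "a*(1-t1) + b*(1-t2) = 1 - (a*t1 + b*t2)" using ab by (simp add: algebra_simps)
  have "a *\<^sub>R x1 + b *\<^sub>R x2 = ((a*(1-t1)) *\<^sub>R l1 + (b*(1-t2)) *\<^sub>R l2) - ((a*t1) *\<^sub>R k1 + (b*t2) *\<^sub>R k2)"
    unfolding e1(6) e2(6) by (simp add: algebra_simps)
  also have "\<dots> = (1 - (a*t1 + b*t2)) *\<^sub>R l - (a*t1 + b*t2) *\<^sub>R k" using l k t by simp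
  finally have x: "a *\<^sub>R x1 + b *\<^sub>R x2 = (1 - (a*t1 + b*t2)) *\<^sub>R l - (a*t1 + b*t2) *\<^sub>R k" .
  have "0 \<le> a*t1 + b*t2" using ab e1 e2 by simp
  moreover have "a*t1 + b*t2 \<le> 1" using ab e1 e2
    by (metis convex_bound_le)
  ultimately show "a *\<^sub>R p1 + b *\<^sub>R p2 \<in> Cset K L"
    using e1(1) e2(1) x l(1) k(1) by (auto simp: Cset_def)
qed

lemma cone_sub_Cset:
  assumes "convex K" "convex L" "K \<noteq> {}" "L \<noteq> {}"
  shows "cone_body K L \<subseteq> Cset K L"
  unfolding cone_body_def
proof (rule hull_minimal)
  show "convex (Cset K L)" using convex_Cset[OF assms(1,2)] .
  show "(\<lambda>x. (x, 0::real)) ` L \<union> (\<lambda>x. (- x, 1::real)) ` K \<subseteq> Cset K L"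
  proof
    fix z assume "z \<in> (\<lambda>x. (x, 0::real)) ` L \<union> (\<lambda>x. (- x, 1::real)) ` K"
    then consider l where "l \<in> L" "z = (l,0)" | k where "k \<in> K" "z = (-k,1)" by auto
    then show "z \<in> Cset K L"
    proof cases
      case 1
      obtain k where "k \<in> K" using assms(3) by auto
      then show ?thesis using 1 unfolding Cset_def by force
    next
      case 2
      obtain l where "l \<in> L" using assms(4) by auto
      then show ?thesis using 2 unfolding Cset_def by force
    qed
  qed
qed
definition sc :: "real \<Rightarrow> 'a::real_vector set \<Rightarrow> 'a set" where
  "sc r S = (\<lambda>x. r *\<^sub>R x) ` S"

definition Eset :: "'a::euclidean_space set \<Rightarrow> 'a set \<Rightarrow> (('a \<times> real) \<times> 'a) set" where
  "Eset K L = {((x,t),y). 0 \<le> t \<and> t \<le> 1 \<and> y \<in> sc (1-t) L \<and> y - x \<in> sc t K}"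

lemma incl:
  assumes "convex K" "convex L" "0 \<le> \<theta>" "\<theta> \<le> 1" "0 \<le> u" "u \<le> 1"
    and c: "c \<in> Cset K L"
  shows "\<exists>d. (\<lambda>y. u *\<^sub>R y + d) ` (sc \<theta> K \<inter> sc (1-\<theta>) L)
            \<subseteq> {y. (u *\<^sub>R (0,\<theta>) + (1-u) *\<^sub>R c, y) \<in> Eset K L}"
proof -
  obtain x' t' l k where e: "c = (x',t')" "0 \<le> t'" "t' \<le> 1" "l \<in> L" "k \<in> K"
     "x' = (1-t') *\<^sub>R l - t' *\<^sub>R k" using c by (auto simp: Cset_def)
  define t where "t = u*\<theta> + (1-u)*t'"
  have q: "u *\<^sub>R (0,\<theta>) + (1-u) *\<^sub>R c = ((1-u) *\<^sub>R x', t)"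
    using e by (simp add: t_def)
  have t0: "0 \<le> t" using assms e by (simp add: t_def)
  have t1: "t \<le> 1" unfolding t_def using assms e
    using convex_bound_le[of \<theta> 1 t' u "1-u"] by simp
  show ?thesis
  proof (intro exI subsetI)
    fix y assume "y \<in> (\<lambda>y. u *\<^sub>R y + (1-u)*\<^sub>R (1-t') *\<^sub>R l) ` (sc \<theta> K \<inter> sc (1-\<theta>) L)"
    then obtain k0 l0 where k0: "k0 \<in> K" and l0: "l0 \<in> L" and m: "\<theta> *\<^sub>R k0 = (1-\<theta>) *\<^sub>R l0"
      and y: "y = u *\<^sub>R (\<theta> *\<^sub>R k0) + (1-u)*\<^sub>R (1-t') *\<^sub>R l"
      by (auto simp: sc_def)
    obtain lw where lw: "lw \<in> L" "(u*(1-\<theta>)) *\<^sub>R l0 + ((1-u)*(1-t')) *\<^sub>R l = (u*(1-\<theta>) + (1-u)*(1-t')) *\<^sub>R lw"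
      using conv_scaled[OF assms(2) l0 e(4), of "u*(1-\<theta>)" "(1-u)*(1-t')"] assms e by auto
    obtain kw where kw: "kw \<in> K" "(u*\<theta>) *\<^sub>R k0 + ((1-u)*t') *\<^sub>R k = (u*\<theta> + (1-u)*t') *\<^sub>R kw"
      using conv_scaled[OF assms(1) k0 e(5), of "u*\<theta>" "(1-u)*t'"] assms e by auto
    have "y = (u*(1-\<theta>)) *\<^sub>R l0 + ((1-u)*(1-t')) *\<^sub>R l"
      unfolding y m by simp
    also have "\<dots> = (1-t) *\<^sub>R lw" using lw by (simp add: t_def algebra_simps)
    finally have yL: "y \<in> sc (1-t) L" using lw(1) by (auto simp: sc_def)
    have "y - (1-u) *\<^sub>R x' = (u*\<theta>) *\<^sub>R k0 + ((1-u)*t') *\<^sub>R k"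
      using y unfolding e(6) by (simp add: algebra_simps)
    also have "\<dots> = t *\<^sub>R kw" using kw by (simp add: t_def)
    finally have yK: "y - (1-u) *\<^sub>R x' \<in> sc t K" using kw(1) by (auto simp: sc_def)
    show "y \<in> {y. (u *\<^sub>R (0,\<theta>) + (1-u) *\<^sub>R c, y) \<in> Eset K L}"
      unfolding q using yL yK t0 t1 by (simp add: Eset_def)
  qed
qed



lemma eml: "S \<in> sets borel \<Longrightarrow> emeasure lebesgue S = emeasure lborel S"
  by simp

lemma vol_aff: "emeasure lebesgue ((\<lambda>x::'a::euclidean_space. m *\<^sub>R x + d) ` S) = ennreal (\<bar>m\<bar> ^ DIM('a)) * emeasure lebesgue S"
  using emeasure_lebesgue_affine[of m d S] by simp

lemma vol_sc: "emeasure lebesgue (sc r (S::'a::euclidean_space set)) = ennreal (\<bar>r\<bar> ^ DIM('a)) * emeasure lebesgue S"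
  using vol_aff[of r 0 S] by (simp add: sc_def)

lemma compact_sc: "compact (S::'a::euclidean_space set) \<Longrightarrow> compact (sc r S)"
  unfolding sc_def by (rule compact_scaling)

lemma fin_compact: "compact (S::'a::euclidean_space set) \<Longrightarrow> emeasure lborel S < \<infinity>"
  using emeasure_bounded_finite compact_imp_bounded by blast

lemma meas_pair: "(f::('a::euclidean_space \<times> 'b::euclidean_space) \<Rightarrow> ennreal) \<in> borel_measurable borel \<Longrightarrow> f \<in> borel_measurable (lborel \<Otimes>\<^sub>M lborel)"
  by (simp add: lborel_prod measurable_lborel1)

lemma closed_Eset:
  assumes "compact K" "compact L"
  shows "closed (Eset K L)"
proof -
  define A where "A = (\<lambda>(t,l). (t, (1-t) *\<^sub>R l)) ` ({0..1::real} \<times> L)"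
  define B where "B = (\<lambda>(t,k). (t, t *\<^sub>R k)) ` ({0..1::real} \<times> K)"
  have cA: "compact A" unfolding A_def
    by (intro compact_continuous_image compact_Times assms compact_Icc) (auto intro!: continuous_intros simp: case_prod_unfold)
  have cB: "compact B" unfolding B_def
    by (intro compact_continuous_image compact_Times assms compact_Icc) (auto intro!: continuous_intros simp: case_prod_unfold)
  have "Eset K L = (\<lambda>z. (snd (fst z), snd z)) -` A \<inter> (\<lambda>z. (snd (fst z), snd z - fst (fst z))) -` B"
    by (auto simp: Eset_def A_def B_def sc_def image_iff)
  moreover have "closed ((\<lambda>z::('a \<times> real) \<times> 'a. (snd (fst z), snd z)) -` A)"
    by (intro continuous_closed_vimage compact_imp_closed cA) (auto intro!: continuous_intros)
  moreover have "closed ((\<lambda>z::('a \<times> real) \<times> 'a. (snd (fst z), snd z - fst (fst z))) -` B)"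
    by (intro continuous_closed_vimage compact_imp_closed cB) (auto intro!: continuous_intros)
  ultimately show ?thesis by auto
qed



lemma upper:
  fixes K L :: "'a::euclidean_space set"
  assumes cK: "compact K" and cL: "compact L"
  shows "(\<integral>\<^sup>+ q. (\<integral>\<^sup>+ y. indicator (Eset K L) (q,y) \<partial>lborel) \<partial>lborel)
       = (\<integral>\<^sup>+ t. ennreal (t^DIM('a) * (1-t)^DIM('a)) * indicator {0..1} t \<partial>lborel)
          * (emeasure lborel K * emeasure lborel L)"
proof -
  let ?n = "DIM('a)"
  let ?E = "Eset K L"
  have Eb[measurable]: "?E \<in> sets borel" using closed_Eset[OF cK cL] by (rule borel_closed)
  have mE[measurable]: "indicator ?E \<in> borel_measurable borel" using Eb by simp
  define \<Phi> where "\<Phi> = (\<lambda>q. \<integral>\<^sup>+ y. indicator ?E (q,y) \<partial>lborel)"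
  have inner: "(\<integral>\<^sup>+ x. \<Phi> (x,t) \<partial>lborel) = ennreal (t^?n * (1-t)^?n) * indicator {0..1} t * (emeasure lborel K * emeasure lborel L)" for t
  proof -
    have m1: "(\<lambda>(x,y). indicator ?E ((x,t),y) :: ennreal) \<in> borel_measurable (lborel \<Otimes>\<^sub>M lborel)"
    proof (rule meas_pair)
      have cl: "closed ((\<lambda>(x,y). ((x,t),y)) -` ?E)"
        by (intro continuous_closed_vimage closed_Eset cK cL) (auto simp: case_prod_unfold intro!: continuous_intros)
      have "(\<lambda>(x,y). indicator ?E ((x,t),y) :: ennreal) = indicator ((\<lambda>(x,y). ((x,t),y)) -` ?E)"
        by (auto simp: indicator_def fun_eq_iff)
      then show "(\<lambda>(x,y). indicator ?E ((x,t),y) :: ennreal) \<in> borel_measurable borel"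
        using borel_closed[OF cl] by simp
    qed
    have "(\<integral>\<^sup>+ x. \<Phi> (x,t) \<partial>lborel) = (\<integral>\<^sup>+ y. \<integral>\<^sup>+ x. indicator ?E ((x,t),y) \<partial>lborel \<partial>lborel)"
      unfolding \<Phi>_def using lborel_pair.Fubini'[OF m1] by simp
    also have "\<dots> = ennreal (t^?n * (1-t)^?n) * indicator {0..1} t * (emeasure lborel K * emeasure lborel L)"
    proof (cases "0 \<le> t \<and> t \<le> 1")
      case False
      have "\<And>x y. indicator ?E ((x,t),y) = (0::ennreal)" using False by (auto simp: Eset_def indicator_def)
      then show ?thesis using False by simp
    next
      case True
      define S where "S y = (\<lambda>z. (-1) *\<^sub>R z + y) ` sc t K" for y
      have Sb: "S y \<in> sets lborel" for y unfolding S_def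
        by (simp, intro borel_compact compact_continuous_image compact_sc cK) (auto intro!: continuous_intros)
      have SK: "emeasure lborel (S y) = ennreal (t^?n) * emeasure lborel K" for y
      proof -
        have "emeasure lborel (S y) = emeasure lebesgue (S y)" using Sb by simp
        also have "\<dots> = emeasure lebesgue (sc t K)" unfolding S_def vol_aff by simp
        also have "\<dots> = ennreal (t^?n) * emeasure lebesgue K" using True by (simp add: vol_sc)
        also have "\<dots> = ennreal (t^?n) * emeasure lborel K" using borel_compact[OF cK] by simp
        finally show ?thesis .
      qed
      have ind: "indicator ?E ((x,t),y) = indicator (sc (1-t) L) y * (indicator (S y) x :: ennreal)" for x y
      proof -
        have "x \<in> S y \<longleftrightarrow> (\<exists>z\<in>sc t K. x = (-1) *\<^sub>R z + y)" by (simp add: S_def image_iff)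
        also have "\<dots> \<longleftrightarrow> y - x \<in> sc t K"
        proof
          assume "\<exists>z\<in>sc t K. x = (-1) *\<^sub>R z + y" then show "y - x \<in> sc t K" by auto
        next
          assume h: "y - x \<in> sc t K" show "\<exists>z\<in>sc t K. x = (-1) *\<^sub>R z + y" by (rule bexI[OF _ h]) simp
        qed
        finally have "x \<in> S y \<longleftrightarrow> y - x \<in> sc t K" .
        then show ?thesis using True by (simp add: Eset_def indicator_def)
      qed
      have "(\<integral>\<^sup>+ y. \<integral>\<^sup>+ x. indicator ?E ((x,t),y) \<partial>lborel \<partial>lborel)
          = (\<integral>\<^sup>+ y. (ennreal (t^?n) * emeasure lborel K) * indicator (sc (1-t) L) y \<partial>lborel)"
      proof (intro nn_integral_cong)
        fix y
        have "(\<integral>\<^sup>+ x. indicator ?E ((x,t),y) \<partial>lborel) = (\<integral>\<^sup>+ x. indicator (sc (1-t) L) y * indicator (S y) x \<partial>lborel)"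
          by (simp add: ind)
        also have "\<dots> = indicator (sc (1-t) L) y * emeasure lborel (S y)"
          by (rule nn_integral_cmult_indicator[OF Sb])
        finally show "(\<integral>\<^sup>+ x. indicator ?E ((x,t),y) \<partial>lborel) = (ennreal (t^?n) * emeasure lborel K) * indicator (sc (1-t) L) y"
          by (simp add: SK mult_ac)
      qed
      also have "\<dots> = (ennreal (t^?n) * emeasure lborel K) * emeasure lborel (sc (1-t) L)"
        using borel_compact[OF compact_sc[OF cL]] by (simp add: nn_integral_cmult_indicator)
      also have "emeasure lborel (sc (1-t) L) = ennreal ((1-t)^?n) * emeasure lborel L"
      proof -
        have "emeasure lborel (sc (1-t) L) = emeasure lebesgue (sc (1-t) L)"
          using borel_compact[OF compact_sc[OF cL]] by simp
        also have "\<dots> = ennreal ((1-t)^?n) * emeasure lebesgue L" using True by (simp add: vol_sc)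
        also have "\<dots> = ennreal ((1-t)^?n) * emeasure lborel L" using borel_compact[OF cL] by simp
        finally show ?thesis .
      qed
      finally show ?thesis using True
        by (simp add: ennreal_mult' mult_ac)
    qed
    finally show ?thesis .
  qed
  have mPhi: "\<Phi> \<in> borel_measurable lborel"
    unfolding \<Phi>_def by (rule lborel.borel_measurable_nn_integral_fst) (rule meas_pair, simp)
  have mPhi2: "\<Phi> \<in> borel_measurable (lborel \<Otimes>\<^sub>M lborel)"
    using mPhi by (simp add: lborel_prod)
  have "(\<integral>\<^sup>+ q. \<Phi> q \<partial>lborel) = (\<integral>\<^sup>+ q. \<Phi> q \<partial>(lborel \<Otimes>\<^sub>M lborel))"
    by (simp add: lborel_prod)
  also have "\<dots> = (\<integral>\<^sup>+ t. \<integral>\<^sup>+ x. \<Phi> (x,t) \<partial>lborel \<partial>lborel)"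
    using lborel_pair.nn_integral_snd[OF mPhi2] by simp
  also have "\<dots> = (\<integral>\<^sup>+ t. ennreal (t^?n * (1-t)^?n) * indicator {0..1} t * (emeasure lborel K * emeasure lborel L) \<partial>lborel)"
    unfolding inner ..
  also have "\<dots> = (\<integral>\<^sup>+ t. ennreal (t^?n * (1-t)^?n) * indicator {0..1} t \<partial>lborel) * (emeasure lborel K * emeasure lborel L)"
    by (rule nn_integral_multc) measurable
  finally show ?thesis unfolding \<Phi>_def .
qed



lemma pow_hasint:
  fixes b :: real assumes "0 \<le> b" "n \<ge> 1"
  shows "((\<lambda>u. real n * u^(n-1)) has_integral b^n) {0..b}"
proof -
  have "((\<lambda>u. real n * u^(n-1)) has_integral (b^n - 0^n)) {0..b}"
    by (rule fundamental_theorem_of_calculus[OF assms(1)])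
       (auto intro!: derivative_eq_intros simp: has_real_derivative_iff_has_vector_derivative[symmetric])
  moreover have "(0::real)^n = 0" using assms by simp
  ultimately show ?thesis by simp
qed

lemma pow_int:
  fixes b :: real assumes "0 \<le> b" "n \<ge> 1"
  shows "(\<integral>\<^sup>+ u. ennreal (real n * u^(n-1)) * indicator {0..b} u \<partial>lborel) = ennreal (b^n)"
  by (rule nn_integral_has_integral_lebesgue'[OF _ pow_hasint[OF assms]]) simp

lemma key:
  fixes m \<phi> :: ennreal and A :: "real set" and n :: nat
  assumes n: "n \<ge> 1" and Ab: "A \<in> sets borel" and mfin: "m < \<infinity>"
    and h: "\<And>u. u \<in> A \<Longrightarrow> 0 \<le> u \<and> u \<le> 1 \<and> ennreal (u^n) * m \<le> \<phi>"
  shows "m * (\<integral>\<^sup>+ u. ennreal (real n * u^(n-1)) * indicator A u \<partial>lborel) \<le> \<phi>"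
proof (cases "m = 0 \<or> \<phi> = \<infinity>")
  case True then show ?thesis by auto
next
  case False
  obtain mr where mr: "m = ennreal mr" "mr > 0" using False mfin
    by (metis ennreal_cases ennreal_less_zero_iff infinity_ennreal_def not_gr_zero top.not_eq_extremum)
  obtain fr where fr: "\<phi> = ennreal fr" "fr \<ge> 0" using False
    by (metis ennreal_cases infinity_ennreal_def)
  define r where "r = fr / mr"
  have r0: "0 \<le> r" using mr fr by (simp add: r_def)
  define b where "b = min 1 (root n r)"
  have b0: "0 \<le> b" using r0 by (simp add: b_def real_root_ge_zero)
  have sub: "A \<subseteq> {0..b}"
  proof
    fix u assume u: "u \<in> A"
    from h[OF u] have u0: "0 \<le> u" "u \<le> 1" and le: "ennreal (u^n) * ennreal mr \<le> ennreal fr"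
      using mr fr by auto
    have "u^n * mr \<le> fr" using le fr(2) u0 by (simp add: ennreal_mult'[symmetric])
    then have "u^n \<le> r" using mr by (simp add: r_def field_simps)
    then have "root n (u^n) \<le> root n r" using n by (intro real_root_le_mono) auto
    moreover have "root n (u^n) = u" using n u0 by (intro real_root_power_cancel) auto
    ultimately have "u \<le> root n r" by simp
    then show "u \<in> {0..b}" using u0 by (simp add: b_def)
  qed
  have "(\<integral>\<^sup>+ u. ennreal (real n * u^(n-1)) * indicator A u \<partial>lborel)
        \<le> (\<integral>\<^sup>+ u. ennreal (real n * u^(n-1)) * indicator {0..b} u \<partial>lborel)"
    using sub by (intro nn_integral_mono mult_left_mono) (auto simp: indicator_def)
  also have "\<dots> = ennreal (b^n)" by (rule pow_int[OF b0 n])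
  also have "ennreal (b^n) \<le> ennreal r"
  proof (rule ennreal_leI)
    have "b \<le> root n r" by (simp add: b_def)
    then have "b^n \<le> (root n r)^n" using b0 by (intro power_mono) auto
    also have "\<dots> = r" using n r0 by simp
    finally show "b^n \<le> r" .
  qed
  finally have I: "(\<integral>\<^sup>+ u. ennreal (real n * u^(n-1)) * indicator A u \<partial>lborel) \<le> ennreal r" .
  have "m * (\<integral>\<^sup>+ u. ennreal (real n * u^(n-1)) * indicator A u \<partial>lborel) \<le> ennreal mr * ennreal r"
    unfolding mr(1) using I by (rule mult_left_mono) auto
  also have "\<dots> = \<phi>" using mr fr r0 by (simp add: r_def ennreal_mult'[symmetric])
  finally show ?thesis .
qed



lemma compact_cone:
  assumes "compact K" "compact L"
  shows "compact (cone_body K L)"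
  unfolding cone_body_def
  by (intro compact_convex_hull compact_Un compact_continuous_image assms) (auto intro!: continuous_intros)

lemma lower:
  fixes K L :: "'a::euclidean_space set"
  assumes cK: "compact K" and cL: "compact L" and vK: "convex K" and vL: "convex L"
    and nK: "K \<noteq> {}" and nL: "L \<noteq> {}" and th: "0 \<le> \<theta>" "\<theta> \<le> 1"
  shows "emeasure lborel (sc \<theta> K \<inter> sc (1-\<theta>) L) * emeasure lborel (cone_body K L) *
           (\<integral>\<^sup>+ u. ennreal (real DIM('a) * u^(DIM('a)-1) * (1-u)^(DIM('a)+1)) * indicator {0..1} u \<partial>lborel)
         \<le> (\<integral>\<^sup>+ q. (\<integral>\<^sup>+ y. indicator (Eset K L) (q,y) \<partial>lborel) \<partial>lborel)"
proof -
  let ?n = "DIM('a)"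
  let ?E = "Eset K L"
  define M where "M = sc \<theta> K \<inter> sc (1-\<theta>) L"
  define C where "C = cone_body K L"
  define m where "m = emeasure lborel M"
  define p :: "'a \<times> real" where "p = (0, \<theta>)"
  define G where "G = (\<lambda>(c,u). (u *\<^sub>R p + (1-u) *\<^sub>R c, u)) ` (C \<times> {0..1::real})"
  define \<Phi> where "\<Phi> = (\<lambda>q. \<integral>\<^sup>+ y. indicator ?E (q,y) \<partial>lborel)"
  have cM: "compact M" unfolding M_def
    by (intro compact_Int compact_sc cK cL)
  have cC: "compact C" unfolding C_def by (rule compact_cone[OF cK cL])
  have cG: "compact G" unfolding G_def
    by (intro compact_continuous_image compact_Times cC compact_Icc) (auto intro!: continuous_intros simp: case_prod_unfold)
  have Gb[measurable]: "G \<in> sets borel" using cG by (rule borel_compact)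
  have Eb[measurable]: "?E \<in> sets borel" using closed_Eset[OF cK cL] by (rule borel_closed)
  have mfin: "m < \<infinity>" unfolding m_def using cM by (rule fin_compact)
  have CC: "C \<subseteq> Cset K L" unfolding C_def by (rule cone_sub_Cset[OF vK vL nK nL])
  have n1: "?n \<ge> 1" using DIM_positive[where 'a='a] by linarith
  \<comment> \<open>pointwise bound\<close>
  have pw: "m * (\<integral>\<^sup>+ u. ennreal (real ?n * u^(?n-1)) * indicator {u. (q,u) \<in> G} u \<partial>lborel) \<le> \<Phi> q" for q
  proof (rule key[OF n1 _ mfin])
    show "{u. (q,u) \<in> G} \<in> sets borel"
    proof -
      have "closed {u. (q,u) \<in> G}"
        using continuous_closed_vimage[OF compact_imp_closed[OF cG], of "\<lambda>u. (q,u)"]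
        by (auto simp: vimage_def intro!: continuous_intros)
      then show ?thesis by (rule borel_closed)
    qed
    fix u assume "u \<in> {u. (q,u) \<in> G}"
    then obtain c where c: "c \<in> C" and u: "0 \<le> u" "u \<le> 1" and q: "q = u *\<^sub>R p + (1-u) *\<^sub>R c"
      by (auto simp: G_def)
    obtain d where d: "(\<lambda>y. u *\<^sub>R y + d) ` M \<subseteq> {y. (q, y) \<in> ?E}"
      using incl[OF vK vL th u _] c CC unfolding q p_def M_def by blast
    let ?T = "(\<lambda>y. u *\<^sub>R y + d) ` M"
    have cT: "compact ?T" by (intro compact_continuous_image cM) (auto intro!: continuous_intros)
    have "ennreal (u^?n) * m = emeasure lebesgue ?T"
      using u borel_compact[OF cM] by (simp add: vol_aff m_def)
    also have "\<dots> = emeasure lborel ?T" using borel_compact[OF cT] by simp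
    also have "\<dots> = (\<integral>\<^sup>+ y. indicator ?T y \<partial>lborel)" using borel_compact[OF cT] by simp
    also have "\<dots> \<le> \<Phi> q" unfolding \<Phi>_def
      using d by (intro nn_integral_mono) (auto simp: indicator_def)
    finally show "0 \<le> u \<and> u \<le> 1 \<and> ennreal (u^?n) * m \<le> \<Phi> q" using u by simp
  qed
  have mg: "(\<lambda>(q,u). ennreal (real ?n * u^(?n-1)) * indicator G (q,u)) \<in> borel_measurable (lborel \<Otimes>\<^sub>M lborel)"
  proof (rule meas_pair)
    have f1[measurable]: "(\<lambda>z::('a\<times>real)\<times>real. ennreal (real ?n * snd z^(?n-1))) \<in> borel_measurable borel"
      by (intro borel_measurable_continuous_onI continuous_on_ennreal continuous_intros)
    have f2[measurable]: "(indicator G :: _ \<Rightarrow> ennreal) \<in> borel_measurable borel" by simp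
    have "(\<lambda>(q,u). ennreal (real ?n * u^(?n-1)) * indicator G (q,u)) = (\<lambda>z. ennreal (real ?n * snd z^(?n-1)) * (indicator G z :: ennreal))"
      by auto
    also have "\<dots> \<in> borel_measurable borel" by measurable
    finally show "(\<lambda>(q,u). ennreal (real ?n * u^(?n-1)) * indicator G (q,u)) \<in> borel_measurable borel" .
  qed
  have slice: "emeasure lborel {q. (q,u) \<in> G} = ennreal ((1-u)^(?n+1)) * indicator {0..1} u * emeasure lborel C" for u
  proof (cases "0 \<le> u \<and> u \<le> 1")
    case False
    have e: "{q. (q,u) \<in> G} = {}" using False by (auto simp: G_def)
    show ?thesis unfolding e using False by simp
  next
    case True
    have eqs: "{q. (q,u) \<in> G} = (\<lambda>c. (1-u) *\<^sub>R c + u *\<^sub>R p) ` C"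
      using True by (auto simp: G_def image_iff add.commute)
    have "emeasure lborel {q. (q,u) \<in> G} = emeasure lebesgue ((\<lambda>c. (1-u) *\<^sub>R c + u *\<^sub>R p) ` C)"
      unfolding eqs
      by (subst eml) (auto intro!: borel_compact compact_continuous_image cC continuous_intros)
    also have "\<dots> = ennreal ((1-u)^(?n+1)) * emeasure lebesgue C"
      using True by (simp add: vol_aff)
    also have "\<dots> = ennreal ((1-u)^(?n+1)) * emeasure lborel C" using borel_compact[OF cC] by simp
    finally show ?thesis using True by simp
  qed
  have "m * emeasure lborel C *
           (\<integral>\<^sup>+ u. ennreal (real ?n * u^(?n-1) * (1-u)^(?n+1)) * indicator {0..1} u \<partial>lborel)
      = m * (\<integral>\<^sup>+ u. ennreal (real ?n * u^(?n-1)) * emeasure lborel {q. (q,u) \<in> G} \<partial>lborel)"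
  proof -
    have "(\<integral>\<^sup>+ u. ennreal (real ?n * u^(?n-1)) * emeasure lborel {q. (q,u) \<in> G} \<partial>lborel)
        = (\<integral>\<^sup>+ u. ennreal (real ?n * u^(?n-1) * (1-u)^(?n+1)) * indicator {0..1} u * emeasure lborel C \<partial>lborel)"
      unfolding slice by (intro nn_integral_cong) (auto simp: ennreal_mult' indicator_def mult_ac)
    also have "\<dots> = (\<integral>\<^sup>+ u. ennreal (real ?n * u^(?n-1) * (1-u)^(?n+1)) * indicator {0..1} u \<partial>lborel) * emeasure lborel C"
      by (rule nn_integral_multc) measurable
    finally show ?thesis by (simp add: mult_ac)
  qed
  also have "\<dots> = m * (\<integral>\<^sup>+ u. \<integral>\<^sup>+ q. ennreal (real ?n * u^(?n-1)) * indicator G (q,u) \<partial>lborel \<partial>lborel)"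
  proof -
    have "\<And>u. (\<integral>\<^sup>+ q. ennreal (real ?n * u^(?n-1)) * indicator G (q,u) \<partial>lborel)
          = ennreal (real ?n * u^(?n-1)) * emeasure lborel {q. (q,u) \<in> G}"
    proof -
      fix u
      have "{q. (q,u) \<in> G} \<in> sets lborel" by measurable
      moreover have "\<And>q. indicator G (q,u) = (indicator {q. (q,u) \<in> G} q :: ennreal)" by (simp add: indicator_def)
      ultimately show "(\<integral>\<^sup>+ q. ennreal (real ?n * u^(?n-1)) * indicator G (q,u) \<partial>lborel)
          = ennreal (real ?n * u^(?n-1)) * emeasure lborel {q. (q,u) \<in> G}"
        by (simp add: nn_integral_cmult_indicator)
    qed
    then show ?thesis by simp
  qed
  also have "\<dots> = m * (\<integral>\<^sup>+ q. \<integral>\<^sup>+ u. ennreal (real ?n * u^(?n-1)) * indicator G (q,u) \<partial>lborel \<partial>lborel)"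
    using lborel_pair.Fubini'[OF mg] by simp
  also have "\<dots> = (\<integral>\<^sup>+ q. m * \<integral>\<^sup>+ u. ennreal (real ?n * u^(?n-1)) * indicator G (q,u) \<partial>lborel \<partial>lborel)"
    by (rule nn_integral_cmult[symmetric]) (use lborel.borel_measurable_nn_integral_fst[OF mg] in simp)
  also have "\<dots> \<le> (\<integral>\<^sup>+ q. \<Phi> q \<partial>lborel)"
    using pw by (intro nn_integral_mono) (simp add: indicator_def)
  finally show ?thesis unfolding \<Phi>_def m_def M_def C_def .
qed



lemma I1_hasint:
  assumes "n \<ge> 1"
  shows "((\<lambda>t::real. t^n * (1-t)^n) has_integral Beta (real n + 1) (real n + 1)) {0..1}"
proof -
  have h: "((\<lambda>t. t powr (real n + 1 - 1) * (1 - t) powr (real n + 1 - 1)) has_integral Beta (real n + 1) (real n + 1)) {0..1}"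
    by (rule has_integral_Beta_real) auto
  have e: "t powr (real n + 1 - 1) * (1 - t) powr (real n + 1 - 1) = t^n * (1-t)^n" if "t \<in> {0..1}" for t :: real
  proof -
    have a: "x powr real n = x^n" if "0 \<le> x" for x :: real
      using that assms by (cases "x = 0") (auto simp: powr_realpow)
    show ?thesis using that a[of t] a[of "1-t"] by simp
  qed
  show ?thesis using h by (subst (asm) has_integral_cong[OF e]) auto
qed

lemma Beta_pos: "n \<ge> 1 \<Longrightarrow> Beta (real n + 1) (real n + 1) > 0"
  by (simp add: Beta_def)

lemma I2_hasint:
  assumes n: "n \<ge> 1"
  shows "((\<lambda>u::real. real n * u^(n-1) * (1-u)^(n+1)) has_integral (real n + 1) * Beta (real n + 1) (real n + 1)) {0..1}"
proof -
  have d: "((\<lambda>u::real. u^n * (1-u)^(n+1)) has_vector_derivative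
             (real n * u^(n-1) * (1-u)^(n+1) - (real n + 1) * (u^n * (1-u)^n))) (at u within {0..1})" for u
  proof -
    have "((\<lambda>u::real. u^n * (1-u)^(n+1)) has_real_derivative
             (real n * u^(n-1) * (1-u)^(n+1) - (real n + 1) * (u^n * (1-u)^n))) (at u within {0..1})"
      by (rule derivative_eq_intros refl | simp)+
    then show ?thesis by (simp add: has_real_derivative_iff_has_vector_derivative)
  qed
  have "((\<lambda>u::real. real n * u^(n-1) * (1-u)^(n+1) - (real n + 1) * (u^n * (1-u)^n)) has_integral
           (1^n * (1-1)^(n+1) - 0^n * (1-0)^(n+1))) {0..1}"
    by (rule fundamental_theorem_of_calculus) (simp, use d in blast)
  then have z: "((\<lambda>u::real. real n * u^(n-1) * (1-u)^(n+1) - (real n + 1) * (u^n * (1-u)^n)) has_integral 0) {0..1}"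
    using n by (simp add: power_0_left)
  have "((\<lambda>u::real. (real n * u^(n-1) * (1-u)^(n+1) - (real n + 1) * (u^n * (1-u)^n)) + (real n + 1) * (u^n * (1-u)^n))
          has_integral (0 + (real n + 1) * Beta (real n + 1) (real n + 1))) {0..1}"
    by (intro has_integral_add z has_integral_mult_right I1_hasint n)
  then show ?thesis by simp
qed



lemma vol_pos:
  fixes K :: "'a::euclidean_space set"
  assumes "interior K \<noteq> {}" "K \<in> sets lborel"
  shows "emeasure lborel K > 0"
proof -
  obtain x where "x \<in> interior K" using assms by auto
  then obtain e where e: "e > 0" "ball x e \<subseteq> K" by (meson mem_interior)
  have "0 < ennreal (measure lborel (ball x e))" using content_ball_pos[OF e(1)] by simp
  also have "ennreal (measure lborel (ball x e)) = emeasure lborel (ball x e)"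
    using emeasure_lborel_ball_finite[of x e] by (simp add: emeasure_eq_ennreal_measure)
  also have "\<dots> \<le> emeasure lborel K" using e assms by (intro emeasure_mono) auto
  finally show ?thesis .
qed

theorem theorem5p2:
  fixes K L :: "'a::euclidean_space set" and \<theta> :: real
  assumes "convex_body K" and "convex_body L" and "0 \<le> \<theta>" and "\<theta> \<le> 1"
  shows "emeasure lebesgue (cone_body K L)
           \<le> ennreal (1 / real (DIM('a) + 1)) * emeasure lebesgue K * emeasure lebesgue L
              / emeasure lebesgue ((\<lambda>x. \<theta> *\<^sub>R x) ` K \<inter> (\<lambda>x. (1 - \<theta>) *\<^sub>R x) ` L)"
proof -
  let ?n = "DIM('a)"
  have cK: "compact K" and vK: "convex K" and iK: "interior K \<noteq> {}"
    and cL: "compact L" and vL: "convex L" and iL: "interior L \<noteq> {}"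
    using assms by (auto simp: convex_body_def)
  have nK: "K \<noteq> {}" using iK interior_subset by blast
  have nL: "L \<noteq> {}" using iL interior_subset by blast
  have n1: "?n \<ge> 1" using DIM_positive[where 'a='a] by linarith
  define M where "M = sc \<theta> K \<inter> sc (1-\<theta>) L"
  define C where "C = cone_body K L"
  have cM: "compact M" unfolding M_def by (intro compact_Int compact_sc cK cL)
  have cC: "compact C" unfolding C_def by (rule compact_cone[OF cK cL])
  have Mdef: "(\<lambda>x. \<theta> *\<^sub>R x) ` K \<inter> (\<lambda>x. (1 - \<theta>) *\<^sub>R x) ` L = M" by (simp add: M_def sc_def)
  have e1: "emeasure lebesgue K = emeasure lborel K" using borel_compact[OF cK] by simp
  have e2: "emeasure lebesgue L = emeasure lborel L" using borel_compact[OF cL] by simp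
  have e3: "emeasure lebesgue M = emeasure lborel M" using borel_compact[OF cM] by simp
  have e4: "emeasure lebesgue (cone_body K L) = emeasure lborel C" using borel_compact[OF cC] by (simp add: C_def)
  define B where "B = Beta (real ?n + 1) (real ?n + 1)"
  have B0: "B > 0" unfolding B_def using Beta_pos[OF n1] .
  have J1: "(\<integral>\<^sup>+ t. ennreal (t^?n * (1-t)^?n) * indicator {0..1} t \<partial>lborel) = ennreal B"
    unfolding B_def by (rule nn_integral_has_integral_lebesgue'[OF _ I1_hasint[OF n1]]) simp
  have J2: "(\<integral>\<^sup>+ u. ennreal (real ?n * u^(?n-1) * (1-u)^(?n+1)) * indicator {0..1} u \<partial>lborel) = ennreal ((real ?n + 1) * B)"
    unfolding B_def by (rule nn_integral_has_integral_lebesgue'[OF _ I2_hasint[OF n1]]) simp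
  have main: "emeasure lborel M * emeasure lborel C * ennreal ((real ?n + 1) * B)
       \<le> ennreal B * (emeasure lborel K * emeasure lborel L)"
    using lower[OF cK cL vK vL nK nL assms(3,4)] upper[OF cK cL]
    unfolding J1 J2 M_def C_def by simp
  obtain a where a: "emeasure lborel K = ennreal a" "a > 0"
    using vol_pos[OF iK] fin_compact[OF cK] borel_compact[OF cK]
    by (metis ennreal_cases ennreal_less_zero_iff infinity_ennreal_def less_irrefl sets_lborel)
  obtain b where b: "emeasure lborel L = ennreal b" "b > 0"
    using vol_pos[OF iL] fin_compact[OF cL] borel_compact[OF cL]
    by (metis ennreal_cases ennreal_less_zero_iff infinity_ennreal_def less_irrefl sets_lborel)
  obtain c where c: "emeasure lborel C = ennreal c" "c \<ge> 0"
    using fin_compact[OF cC] by (metis ennreal_cases infinity_ennreal_def less_irrefl)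
  obtain mr where mr: "emeasure lborel M = ennreal mr" "mr \<ge> 0"
    using fin_compact[OF cM] by (metis ennreal_cases infinity_ennreal_def less_irrefl)
  show ?thesis
  proof (cases "mr = 0")
    case True
    have "ennreal (1 / real (?n + 1)) * ennreal a * ennreal b \<noteq> 0"
      using a b by (simp add: ennreal_mult'[symmetric])
    then have "ennreal (1 / real (?n + 1)) * ennreal a * ennreal b / 0 = \<infinity>"
      by (simp add: divide_ennreal_def ennreal_mult_top)
    then show ?thesis unfolding Mdef e1 e2 e3 e4 a b mr True by simp
  next
    case False
    then have mpos: "mr > 0" using mr by simp
    have "mr * c * ((real ?n + 1) * B) \<le> B * (a * b)"
      using main unfolding a b c mr using a b c mr B0
      by (simp add: ennreal_mult'[symmetric] mult_nonneg_nonneg)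
    then have "(mr * c * (real ?n + 1)) * B \<le> (a * b) * B" by (simp add: mult_ac)
    then have "mr * c * (real ?n + 1) \<le> a * b" using B0 by simp
    then have "c * (mr * (real ?n + 1)) \<le> a * b" by (simp add: mult_ac)
    then have "c \<le> a * b / (mr * (real ?n + 1))" using mpos
      by (subst pos_le_divide_eq) auto
    also have "a * b / (mr * (real ?n + 1)) = (1 / real (?n + 1)) * a * b / mr" by simp
    finally have ineq: "c \<le> (1 / real (?n + 1)) * a * b / mr" .
    have "ennreal (1 / real (?n + 1)) * ennreal a * ennreal b / ennreal mr
          = ennreal ((1 / real (?n + 1)) * a * b / mr)"
      using a b mpos by (simp add: ennreal_mult'[symmetric] divide_ennreal)
    then show ?thesis unfolding Mdef e1 e2 e3 e4 a b c mr using ineq by (simp add: ennreal_leI)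
  qed
qed

end
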